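(* Let $K_0,K_1\in\mathcal{S}_n$ be an $\mathcal{S}_n$-cute pair with $\delta(K_0,K_1)\ge 4$. Then $\frac12(K_0+K_1)$ is a lens.
   Context: Convex bodies are compact convex non-empty subsets of $\mathbb{R}^n$; $B_2^n$ is the closed Euclidean unit ball; $\delta$ is the Hausdorff distance $\delta(K_0,K_1)=\inf\{\lambda>0: K_0\subseteq K_1+\lambda B_2^n,\ K_1\subseteq K_0+\lambda B_2^n\}$. $\mathcal{S}_n$ is the set of convex bodies in $\mathbb{R}^n$ which are intersections of Euclidean unit balls. A pair $(K_0,K_1)\in\mathcal{S}_n\times\mathcal{S}_n$ is called $\mathcal{S}_n$-cute if $M=\frac{K_0+K_1}{2}$ is the unique body in $\mathcal{S}_n$ satisfying $\delta(K_0,M)=\frac12\delta(K_0,K_1)$ and $\delta(K_1,M)=\frac12\delta(K_0,K_1)$. A lens is a nonempty intersection of two Euclidean balls of radius $1$, i.e. a set $(a+B_2^n)\cap(b+B_2^n)\neq\emptyset$ with $a,b\in\mathbb{R}^n$ (this includes single points and unit balls). *)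

theory Defs
  imports "HOL-Analysis.Analysis"
begin

definition convex_body :: "'a::euclidean_space set \<Rightarrow> bool" where
  "convex_body K \<longleftrightarrow> compact K \<and> convex K \<and> K \<noteq> {}"

definition msum :: "'a::euclidean_space set \<Rightarrow> 'a set \<Rightarrow> 'a set" where
  "msum A B = {x + y | x y. x \<in> A \<and> y \<in> B}"

definition mscale :: "real \<Rightarrow> 'a::euclidean_space set \<Rightarrow> 'a set" where
  "mscale t A = (\<lambda>x. t *\<^sub>R x) ` A"

definition hdist :: "'a::euclidean_space set \<Rightarrow> 'a set \<Rightarrow> real" where
  "hdist K0 K1 = Inf {r. r > 0 \<and> K0 \<subseteq> msum K1 (cball 0 r) \<and> K1 \<subseteq> msum K0 (cball 0 r)}"

definition in_S :: "'a::euclidean_space set \<Rightarrow> bool" where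
  "in_S K \<longleftrightarrow> convex_body K \<and> (\<exists>A. K = \<Inter> ((\<lambda>a. cball a 1) ` A))"

definition S_cute :: "'a::euclidean_space set \<Rightarrow> 'a set \<Rightarrow> bool" where
  "S_cute K0 K1 \<longleftrightarrow> in_S K0 \<and> in_S K1 \<and>
     (let M = mscale (1/2) (msum K0 K1) in
        in_S M \<and> hdist K0 M = hdist K0 K1 / 2 \<and> hdist K1 M = hdist K0 K1 / 2 \<and>
        (\<forall>M'. in_S M' \<and> hdist K0 M' = hdist K0 K1 / 2 \<and> hdist K1 M' = hdist K0 K1 / 2
              \<longrightarrow> M' = M))"

definition lens :: "'a::euclidean_space set \<Rightarrow> bool" where
  "lens L \<longleftrightarrow> (\<exists>a b. cball a 1 \<inter> cball b 1 \<noteq> {} \<and> L = cball a 1 \<inter> cball b 1)"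

end

theory Submission
  imports Defs
begin


lemma SB_core:
  fixes X g u :: "'a::euclidean_space"
  assumes X1: "norm X \<le> 1" and X2: "norm (X - g) \<le> 1" and u1: "norm u = 1"
    and mu0: "0 \<le> \<mu>" and eta0: "0 \<le> \<eta>" and lam: "0 \<le> 1 + \<eta> - \<mu>"
    and br: "\<eta> * (2 + \<eta>) + 2 * \<eta> * \<mu> * inner u g \<le> \<mu> * (1 - \<mu>) * inner g g"
  shows "norm (X - \<eta> *\<^sub>R u - \<mu> *\<^sub>R g) \<le> 1"
proof -
  define xx where "xx = inner X X"
  define xg where "xg = inner X g"
  define xu where "xu = inner X u"
  define gg where "gg = inner g g"
  define ug where "ug = inner u g"
  have uu: "inner u u = 1" using u1 by (simp add: dot_square_norm)
  have h1: "xx \<le> 1" using X1 unfolding xx_def by (simp add: dot_square_norm power_le_one)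
  have "inner (X - g) (X - g) \<le> 1" using X2 by (simp add: dot_square_norm power_le_one)
  hence h2: "xx - 2 * xg + gg \<le> 1" unfolding xx_def xg_def gg_def
    by (simp add: inner_diff_left inner_diff_right inner_commute)
  have "0 \<le> inner (X + u) (X + u)" by simp
  hence h3: "0 \<le> xx + 2 * xu + 1" unfolding xx_def xu_def
    using uu by (simp add: inner_add_left inner_add_right inner_commute)
  have e: "inner (X - \<eta> *\<^sub>R u - \<mu> *\<^sub>R g) (X - \<eta> *\<^sub>R u - \<mu> *\<^sub>R g)
      = xx + \<eta>^2 + \<mu>^2 * gg - 2*\<eta>*xu - 2*\<mu>*xg + 2*\<eta>*\<mu>*ug"
    unfolding xx_def xu_def xg_def gg_def ug_def using uu
    by (simp add: inner_diff_left inner_diff_right inner_commute algebra_simps power2_eq_square)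
  have a1: "(1 + \<eta> - \<mu>) * (xx - 1) \<le> 0" using lam h1 by (simp add: mult_nonneg_nonpos)
  have a2: "\<mu> * (xx - 2 * xg + gg - 1) \<le> 0" using mu0 h2 by (simp add: mult_nonneg_nonpos)
  have a3: "0 \<le> \<eta> * (xx + 2 * xu + 1)" using eta0 h3 by simp
  have id: "xx + \<eta>^2 + \<mu>^2 * gg - 2*\<eta>*xu - 2*\<mu>*xg + 2*\<eta>*\<mu>*ug - 1
     = (1 + \<eta> - \<mu>) * (xx - 1) + \<mu> * (xx - 2 * xg + gg - 1) - \<eta> * (xx + 2 * xu + 1)
       + (\<eta> * (2 + \<eta>) + 2 * \<eta> * \<mu> * ug - \<mu> * (1 - \<mu>) * gg)"
    by (simp add: algebra_simps power2_eq_square)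
  have "inner (X - \<eta> *\<^sub>R u - \<mu> *\<^sub>R g) (X - \<eta> *\<^sub>R u - \<mu> *\<^sub>R g) \<le> 1"
    using e id a1 a2 a3 br unfolding ug_def gg_def by linarith
  thus ?thesis by (simp add: dot_square_norm power_le_one_iff norm_ge_zero)
qed

lemma SB:
  fixes K A :: "'a::euclidean_space set"
  assumes K: "K = \<Inter>((\<lambda>a. cball a 1) ` A)" and p: "p \<in> K" and u1: "norm u = 1"
    and mx: "\<forall>x\<in>K. inner x u \<le> inner p u" and z: "z \<in> K"
  shows "dist z (p - u) \<le> 1"
proof (rule ccontr)
  assume "\<not> dist z (p - u) \<le> 1"
  hence gt: "1 < norm ((z - p) + u)" by (simp add: dist_norm algebra_simps)
  define g where "g = z - p"
  define \<delta> where "\<delta> = - inner u g"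
  define G where "G = inner g g"
  have uu: "inner u u = 1" using u1 by (simp add: dot_square_norm)
  have d0: "0 \<le> \<delta>" using mx z unfolding \<delta>_def g_def by (auto simp: inner_diff_right inner_commute)
  have "1 < inner (g + u) (g + u)" using gt unfolding g_def
    by (metis dot_square_norm less_1_mult norm_ge_zero power2_eq_square order_less_le_trans zero_less_one less_imp_le)
  hence "1 < G + 2 * inner u g + 1" unfolding G_def using uu
    by (simp add: inner_add_left inner_add_right inner_commute)
  hence Gd: "2 * \<delta> < G" unfolding \<delta>_def by simp
  define c where "c = (\<delta> + G/2)/2"
  define \<mu> where "\<mu> = (G/2 - \<delta>)/(c^2 + G + 1)"
  define \<eta> where "\<eta> = \<mu> * c"
  have G0: "0 \<le> G" unfolding G_def by simp
  have den: "0 < c^2 + G + 1" using G0 by (simp add: add_nonneg_pos)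
  have mu0: "0 < \<mu>" unfolding \<mu>_def using den Gd by simp
  have c0: "0 \<le> c" unfolding c_def using d0 G0 by simp
  have eta0: "0 \<le> \<eta>" unfolding \<eta>_def using mu0 c0 by simp
  have mueq: "\<mu> * (c^2 + G + 1) = G/2 - \<delta>" unfolding \<mu>_def using den by simp
  have mu1: "\<mu> \<le> 1"
  proof -
    have "0 \<le> c^2" by simp
    hence "G/2 - \<delta> \<le> c^2 + G + 1" using d0 G0 by linarith
    thus ?thesis unfolding \<mu>_def using den by simp
  qed
  have lam: "0 \<le> 1 + \<eta> - \<mu>" using mu1 eta0 by simp
  have key: "\<mu> * (c^2 - 2*c*\<delta> + G) \<le> G - 2*c"
  proof -
    have "\<mu> * (c^2 - 2*c*\<delta> + G) \<le> \<mu> * (c^2 + G + 1)"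
    proof (rule mult_left_mono)
      have "0 \<le> c * \<delta>" using c0 d0 by simp
      thus "c^2 - 2*c*\<delta> + G \<le> c^2 + G + 1" by linarith
    qed (use mu0 in simp)
    moreover have "G - 2*c = G/2 - \<delta>" unfolding c_def by (simp add: field_simps)
    ultimately show ?thesis using mueq by linarith
  qed
  have br: "\<eta> * (2 + \<eta>) + 2 * \<eta> * \<mu> * inner u g \<le> \<mu> * (1 - \<mu>) * inner g g"
  proof -
    have "\<eta> * (2 + \<eta>) + 2 * \<eta> * \<mu> * inner u g - \<mu> * (1 - \<mu>) * inner g g
        = \<mu> * (\<mu> * (c^2 - 2*c*\<delta> + G) - (G - 2*c))"
      unfolding \<eta>_def \<delta>_def G_def by (simp add: algebra_simps power2_eq_square)
    also have "\<dots> \<le> 0" using key mu0 by (simp add: mult_nonneg_nonpos)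
    finally show ?thesis by simp
  qed
  define w where "w = p + \<eta> *\<^sub>R u + \<mu> *\<^sub>R g"
  have "\<forall>a\<in>A. w \<in> cball a 1"
  proof
    fix a assume a: "a \<in> A"
    have pa: "norm (a - p) \<le> 1" using p a unfolding K by (auto simp: dist_norm)
    have za: "norm (a - p - g) \<le> 1" using z a unfolding K g_def by (auto simp: dist_norm)
    have "norm ((a - p) - \<eta> *\<^sub>R u - \<mu> *\<^sub>R g) \<le> 1"
      using SB_core[OF pa za u1 less_imp_le[OF mu0] eta0 lam br] .
    thus "w \<in> cball a 1" unfolding w_def by (simp add: dist_norm algebra_simps)
  qed
  hence "w \<in> K" unfolding K by blast
  hence "inner w u \<le> inner p u" using mx by blast
  moreover have "inner w u = inner p u + \<eta> - \<mu> * \<delta>"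
  proof -
    have "inner w u = inner p u + \<eta> * inner u u + \<mu> * inner g u"
      unfolding w_def by (simp add: inner_add_left)
    moreover have "inner g u = inner u g" by (rule inner_commute)
    ultimately show ?thesis unfolding \<delta>_def using uu by simp
  qed
  moreover have "\<eta> - \<mu> * \<delta> > 0"
  proof -
    have "c - \<delta> > 0" unfolding c_def using Gd by simp
    hence "\<mu> * (c - \<delta>) > 0" using mu0 by simp
    thus ?thesis unfolding \<eta>_def by (simp add: algebra_simps)
  qed
  ultimately show False by simp
qed



lemma msum_cball_iff: "x \<in> msum A (cball 0 r) \<longleftrightarrow> (\<exists>a\<in>A. dist x a \<le> r)"
proof
  assume "x \<in> msum A (cball 0 r)"
  then obtain a v where "x = a + v" "a \<in> A" "v \<in> cball 0 r" unfolding msum_def by auto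
  thus "\<exists>a\<in>A. dist x a \<le> r" by (intro bexI[of _ a]) (auto simp: dist_norm)
next
  assume "\<exists>a\<in>A. dist x a \<le> r"
  then obtain a where a: "a \<in> A" "dist x a \<le> r" by auto
  have "x = a + (x - a)" by simp
  moreover have "x - a \<in> cball 0 r" using a by (simp add: dist_norm norm_minus_commute)
  ultimately show "x \<in> msum A (cball 0 r)" unfolding msum_def using a by blast
qed

definition hset :: "'a::euclidean_space set \<Rightarrow> 'a set \<Rightarrow> real set" where
  "hset K0 K1 = {r. r > 0 \<and> K0 \<subseteq> msum K1 (cball 0 r) \<and> K1 \<subseteq> msum K0 (cball 0 r)}"

lemma hdist_hset: "hdist A B = Inf (hset A B)" unfolding hdist_def hset_def ..

lemma hset_sym: "hset A B = hset B A" unfolding hset_def by auto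

lemma hdist_sym: "hdist A B = hdist B A" unfolding hdist_hset by (subst hset_sym) (rule refl)

lemma hdist_le: "r \<in> hset A B \<Longrightarrow> hdist A B \<le> r"
  unfolding hdist_hset by (rule cInf_lower) (auto simp: hset_def bdd_below_def intro!: exI[of _ 0])

lemma hdist_infdist:
  assumes "hset A B \<noteq> {}" "k \<in> B"
  shows "infdist k A \<le> hdist A B"
  unfolding hdist_hset
proof (rule cInf_greatest[OF assms(1)])
  fix r assume "r \<in> hset A B"
  hence "k \<in> msum A (cball 0 r)" using assms(2) unfolding hset_def by auto
  then obtain a where "a \<in> A" "dist k a \<le> r" using msum_cball_iff by blast
  thus "infdist k A \<le> r" using infdist_le[of a A k] by linarith
qed

lemma hset_add:
  assumes "s \<in> hset A B" "t \<in> hset B C" shows "s + t \<in> hset A C"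
proof -
  have sub: "X \<subseteq> msum Z (cball 0 (s1 + t1))" if "X \<subseteq> msum Y (cball 0 s1)" "Y \<subseteq> msum Z (cball 0 t1)"
    for X Y Z :: "'a set" and s1 t1 :: real
  proof
    fix x assume "x \<in> X"
    hence "x \<in> msum Y (cball 0 s1)" using that(1) by (rule subsetD[rotated])
    then obtain y where y: "y \<in> Y" "dist x y \<le> s1" unfolding msum_cball_iff by (elim bexE)
    have "y \<in> msum Z (cball 0 t1)" using that(2) y(1) by (rule subsetD)
    then obtain z where z: "z \<in> Z" "dist y z \<le> t1" unfolding msum_cball_iff by (elim bexE)
    have "dist x z \<le> s1 + t1" using y z dist_triangle[of x z y] by linarith
    thus "x \<in> msum Z (cball 0 (s1 + t1))" unfolding msum_cball_iff using z(1) by (intro bexI)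
  qed
  have s: "s > 0" "A \<subseteq> msum B (cball 0 s)" "B \<subseteq> msum A (cball 0 s)" using assms(1) unfolding hset_def by auto
  have t: "t > 0" "B \<subseteq> msum C (cball 0 t)" "C \<subseteq> msum B (cball 0 t)" using assms(2) unfolding hset_def by auto
  have "A \<subseteq> msum C (cball 0 (s + t))" using sub[OF s(2) t(2)] .
  moreover have "C \<subseteq> msum A (cball 0 (t + s))" using sub[OF t(3) s(3)] .
  ultimately show ?thesis using s(1) t(1) unfolding hset_def by (simp add: add.commute)
qed

lemma hdist_tri:
  assumes "hset A B \<noteq> {}" "hset B C \<noteq> {}"
  shows "hdist A C \<le> hdist A B + hdist B C"
proof -
  have "hdist A C - t \<le> hdist A B" if t: "t \<in> hset B C" for t
    unfolding hdist_hset[of A B]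
  proof (rule cInf_greatest[OF assms(1)])
    fix s assume "s \<in> hset A B"
    hence "hdist A C \<le> s + t" using hset_add t hdist_le by blast
    thus "hdist A C - t \<le> s" by simp
  qed
  hence "\<And>t. t \<in> hset B C \<Longrightarrow> hdist A C - hdist A B \<le> t" by (simp add: algebra_simps)
  hence "hdist A C - hdist A B \<le> Inf (hset B C)"
    using assms(2) by (intro cInf_greatest) auto
  hence "hdist A C - hdist A B \<le> hdist B C" by (simp add: hdist_hset[of B C])
  thus ?thesis by simp
qed



lemma inS_basic:
  fixes K :: "'a::euclidean_space set"
  assumes "in_S K"
  shows "compact K" "convex K" "K \<noteq> {}" "closed K"
    "\<exists>A. K = \<Inter>((\<lambda>a. cball a 1) ` A)" "\<exists>a. K \<subseteq> cball a 1"
proof -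
  show c: "compact K" "convex K" "K \<noteq> {}" using assms unfolding in_S_def convex_body_def by auto
  thus "closed K" by (simp add: compact_imp_closed)
  show "\<exists>A. K = \<Inter>((\<lambda>a. cball a 1) ` A)" using assms unfolding in_S_def by auto
  then obtain A where A: "K = \<Inter>((\<lambda>a. cball a 1) ` A)" by blast
  have "A \<noteq> {}"
  proof
    assume "A = {}"
    hence "K = UNIV" using A by simp
    thus False using c(1) compact_imp_bounded not_bounded_UNIV by metis
  qed
  then obtain a where "a \<in> A" by blast
  thus "\<exists>a. K \<subseteq> cball a 1" using A by blast
qed

lemma inS_diam:
  fixes K :: "'a::euclidean_space set"
  assumes "in_S K" "x \<in> K" "y \<in> K"
  shows "dist x y \<le> 2"
proof -
  obtain a where a: "K \<subseteq> cball a 1" using inS_basic(6)[OF assms(1)] by blast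
  hence "dist a x \<le> 1" "dist a y \<le> 1" using assms by auto
  thus ?thesis using dist_triangle[of x y a] by (simp add: dist_commute)
qed

lemma hset_ne:
  fixes K0 K1 :: "'a::euclidean_space set"
  assumes "in_S K0" "in_S K1"
  shows "hset K0 K1 \<noteq> {}"
proof -
  obtain a0 where a0: "K0 \<subseteq> cball a0 1" using inS_basic(6)[OF assms(1)] by blast
  obtain a1 where a1: "K1 \<subseteq> cball a1 1" using inS_basic(6)[OF assms(2)] by blast
  obtain p0 where p0: "p0 \<in> K0" using inS_basic(3)[OF assms(1)] by blast
  obtain p1 where p1: "p1 \<in> K1" using inS_basic(3)[OF assms(2)] by blast
  define R where "R = dist a0 a1 + 2"
  have dd: "dist x y \<le> R" if "x \<in> K0" "y \<in> K1" for x y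
  proof -
    have "dist a0 x \<le> 1" "dist a1 y \<le> 1" using that a0 a1 by auto
    thus ?thesis unfolding R_def using dist_triangle[of x y a0] dist_triangle[of a0 y a1]
      by (simp add: dist_commute)
  qed
  have "R \<in> hset K0 K1"
    unfolding hset_def
  proof (intro CollectI conjI subsetI)
    show "R > 0" unfolding R_def by (simp add: add_nonneg_pos)
  next
    fix x assume "x \<in> K0"
    thus "x \<in> msum K1 (cball 0 R)" unfolding msum_cball_iff using dd p1 by blast
  next
    fix x assume "x \<in> K1"
    thus "x \<in> msum K0 (cball 0 R)" unfolding msum_cball_iff using dd p0 by (metis dist_commute)
  qed
  thus ?thesis by blast
qed



lemma side:
  fixes K0 K1 :: "'a::euclidean_space set"
  assumes S0: "in_S K0" and S1: "in_S K1" and d4: "hdist K0 K1 \<ge> 4"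
  shows "\<exists>c. (\<forall>a\<in>K0. \<forall>b\<in>K1. (1/2) *\<^sub>R (a + b) \<in> cball c 1)
             \<and> cball c 1 \<subseteq> msum K0 (cball 0 (hdist K0 K1 / 2))"
proof -
  define d where "d = hdist K0 K1"
  have hinf: "infdist k K0 \<le> d" if "k \<in> K1" for k
    unfolding d_def using hdist_infdist[OF hset_ne[OF S0 S1] that] .
  have cpt1: "compact K1" "K1 \<noteq> {}" using inS_basic[OF S1] by auto
  have cl0: "closed K0" "K0 \<noteq> {}" "convex K0" using inS_basic[OF S0] by auto
  have "continuous_on K1 (\<lambda>x. infdist x K0)"
    by (intro continuous_on_infdist continuous_on_id)
  then obtain k1 where k1: "k1 \<in> K1" and k1max: "\<forall>y\<in>K1. infdist y K0 \<le> infdist k1 K0"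
    using continuous_attains_sup[OF cpt1] by blast
  define D where "D = infdist k1 K0"
  obtain q0 where q0: "q0 \<in> K0" and Dq: "D = dist k1 q0"
    using infdist_attains_inf[OF cl0(1) cl0(2)] unfolding D_def by metis
  have Dd: "D \<le> d" unfolding D_def using hinf k1 .
  have D0: "0 \<le> D" unfolding D_def by (rule infdist_nonneg)
  have Dpos: "0 < D"
  proof (rule ccontr)
    assume "\<not> 0 < D"
    hence "D = 0" using D0 by simp
    hence sub: "K1 \<subseteq> K0"
    proof (intro subsetI)
      fix y assume "y \<in> K1"
      hence "infdist y K0 = 0" using k1max \<open>D = 0\<close> infdist_nonneg[of y K0] unfolding D_def by force
      thus "y \<in> K0" using in_closed_iff_infdist_zero[OF cl0(1) cl0(2)] by blast
    qed
    have "(2::real) \<in> hset K0 K1"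
      unfolding hset_def
    proof (intro CollectI conjI subsetI)
      fix x assume x: "x \<in> K0"
      have "dist x k1 \<le> 2" using inS_diam[OF S0 x] sub k1 by blast
      thus "x \<in> msum K1 (cball 0 2)" unfolding msum_cball_iff using k1 by blast
    next
      fix x assume x: "x \<in> K1"
      thus "x \<in> msum K0 (cball 0 2)" unfolding msum_cball_iff using sub by force
    qed simp
    hence "d \<le> 2" unfolding d_def by (rule hdist_le)
    thus False using d4 unfolding d_def by simp
  qed
  define u where "u = (1/D) *\<^sub>R (k1 - q0)"
  have kq: "k1 - q0 = D *\<^sub>R u" unfolding u_def using Dpos by simp
  have nu: "norm u = 1" unfolding u_def using Dpos Dq by (simp add: dist_norm)
  have uu: "inner u u = 1" using nu by (simp add: dot_square_norm)
  have q0max: "\<forall>x\<in>K0. inner x u \<le> inner q0 u"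
  proof
    fix x assume x: "x \<in> K0"
    have "\<forall>z\<in>K0. dist k1 q0 \<le> dist k1 z" using infdist_le[of _ K0 k1] Dq unfolding D_def by metis
    hence "inner (k1 - q0) (x - q0) \<le> 0"
      using any_closest_point_dot[OF cl0(3) cl0(1) q0 x] by blast
    hence "inner (D *\<^sub>R u) (x - q0) \<le> 0" using kq by simp
    hence "D * inner u (x - q0) \<le> 0" by simp
    hence "inner u (x - q0) \<le> 0" using Dpos by (simp add: mult_le_0_iff)
    thus "inner x u \<le> inner q0 u" by (simp add: inner_diff_right inner_commute)
  qed
  have k1max2: "\<forall>x\<in>K1. inner x u \<le> inner k1 u"
  proof (rule ballI, rule ccontr)
    fix x assume x: "x \<in> K1" and "\<not> inner x u \<le> inner k1 u"
    hence gt: "inner x u > inner k1 u" by simp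
    obtain y where y: "y \<in> K0" "infdist x K0 = dist x y"
      using infdist_attains_inf[OF cl0(1) cl0(2)] by metis
    have "inner (x - y) u \<le> norm (x - y) * norm u" by (rule norm_cauchy_schwarz)
    hence "inner x u - inner y u \<le> dist x y" using nu by (simp add: inner_diff_left dist_norm)
    moreover have "inner y u \<le> inner q0 u" using q0max y(1) by blast
    moreover have "inner k1 u - inner q0 u = D"
    proof -
      have "inner (k1 - q0) u = D * inner u u" using kq by simp
      thus ?thesis using uu by (simp add: inner_diff_left)
    qed
    ultimately have "infdist x K0 > D" using gt y(2) by linarith
    thus False using k1max x unfolding D_def by force
  qed
  obtain A0 where A0: "K0 = \<Inter>((\<lambda>a. cball a 1) ` A0)" using inS_basic(5)[OF S0] by blast
  obtain A1 where A1: "K1 = \<Inter>((\<lambda>a. cball a 1) ` A1)" using inS_basic(5)[OF S1] by blast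
  have sb0: "dist a (q0 - u) \<le> 1" if "a \<in> K0" for a
    using SB[OF A0 q0 nu q0max that] .
  have sb1: "dist b (k1 - u) \<le> 1" if "b \<in> K1" for b
    using SB[OF A1 k1 nu k1max2 that] .
  define c where "c = (1/2) *\<^sub>R (q0 + k1) - u"
  show ?thesis
  proof (intro exI[of _ c] conjI ballI subsetI)
    fix a b assume a: "a \<in> K0" and b: "b \<in> K1"
    have eq: "(1/2) *\<^sub>R (a + b) - c = (1/2) *\<^sub>R ((a - (q0 - u)) + (b - (k1 - u)))"
      unfolding c_def by (simp add: algebra_simps flip: scaleR_add_left)
    have "norm ((a - (q0 - u)) + (b - (k1 - u))) \<le> 2"
      using norm_triangle_ineq[of "a - (q0 - u)" "b - (k1 - u)"] sb0[OF a] sb1[OF b]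
      by (simp add: dist_norm)
    hence "norm ((1/2) *\<^sub>R (a + b) - c) \<le> 1" unfolding eq by simp
    thus "(1/2) *\<^sub>R (a + b) \<in> cball c 1" by (simp add: dist_norm norm_minus_commute)
  next
    fix x assume x: "x \<in> cball c 1"
    have cq: "c - q0 = (D/2 - 1) *\<^sub>R u"
    proof -
      have "c - q0 = (1/2) *\<^sub>R (k1 - q0) - u" unfolding c_def by (simp add: algebra_simps flip: scaleR_add_left)
      also have "\<dots> = (D/2 - 1) *\<^sub>R u" unfolding kq by (simp add: algebra_simps)
      finally show ?thesis .
    qed
    have "norm (c - q0) = \<bar>D/2 - 1\<bar>" unfolding cq using nu by simp
    also have "\<dots> \<le> d/2 - 1" using Dd D0 d4 unfolding d_def by linarith
    finally have "dist c q0 \<le> d/2 - 1" by (simp add: dist_norm)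
    moreover have "dist x c \<le> 1" using x by (simp add: dist_commute)
    ultimately have "dist x q0 \<le> d/2" using dist_triangle[of x q0 c] by linarith
    thus "x \<in> msum K0 (cball 0 (hdist K0 K1 / 2))" unfolding msum_cball_iff d_def using q0 by blast
  qed
qed



lemma M_mem:
  "m \<in> mscale (1/2) (msum K0 K1) \<longleftrightarrow> (\<exists>a\<in>K0. \<exists>b\<in>K1. m = (1/2) *\<^sub>R (a + b))"
  unfolding mscale_def msum_def by blast

theorem lemma8:
  fixes K0 K1 :: "'a::euclidean_space set"
  assumes "in_S K0" and "in_S K1"
    and "S_cute K0 K1"
    and "hdist K0 K1 \<ge> 4"
  shows "lens (mscale (1/2) (msum K0 K1))"
proof -
  note S0 = assms(1) and S1 = assms(2)
  define d where "d = hdist K0 K1"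
  define M where "M = mscale (1/2) (msum K0 K1)"
  have dsym: "hdist K1 K0 = d" unfolding d_def by (rule hdist_sym)
  obtain c1 where c1: "\<forall>a\<in>K0. \<forall>b\<in>K1. (1/2) *\<^sub>R (a + b) \<in> cball c1 1"
      "cball c1 1 \<subseteq> msum K0 (cball 0 (d / 2))"
    using side[OF S0 S1 assms(4)] unfolding d_def by blast
  obtain c2 where c2: "\<forall>b\<in>K1. \<forall>a\<in>K0. (1/2) *\<^sub>R (b + a) \<in> cball c2 1"
      "cball c2 1 \<subseteq> msum K1 (cball 0 (d / 2))"
    using side[OF S1 S0] assms(4) unfolding dsym d_def by (metis hdist_sym)
  define L where "L = cball c1 1 \<inter> cball c2 1"
  have MsubL: "M \<subseteq> L"
  proof
    fix m assume "m \<in> M"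
    then obtain a b where ab: "a \<in> K0" "b \<in> K1" "m = (1/2) *\<^sub>R (a + b)"
      unfolding M_def M_mem by blast
    have "m \<in> cball c1 1" using c1(1) ab by blast
    moreover have "m \<in> cball c2 1" using c2(1) ab by (metis add.commute)
    ultimately show "m \<in> L" unfolding L_def by blast
  qed
  have d4: "d \<ge> 4" using assms(4) unfolding d_def .
  have ne: "hset K0 K1 \<noteq> {}" "hset K1 K0 \<noteq> {}" using hset_ne S0 S1 by blast+
  have cl0: "closed K0" "K0 \<noteq> {}" using inS_basic[OF S0] by auto
  have cl1: "closed K1" "K1 \<noteq> {}" using inS_basic[OF S1] by auto
  have K0L: "K0 \<subseteq> msum L (cball 0 (d/2))"
  proof
    fix k assume k: "k \<in> K0"
    obtain b where b: "b \<in> K1" "infdist k K1 = dist k b"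
      using infdist_attains_inf[OF cl1] by metis
    have "infdist k K1 \<le> d" using hdist_infdist[OF ne(2) k] dsym by simp
    hence "dist k b \<le> d" using b by simp
    define m where "m = (1/2) *\<^sub>R (k + b)"
    have "m \<in> M" unfolding M_def M_mem m_def using k b(1) by blast
    hence "m \<in> L" using MsubL by blast
    moreover have "dist k m = dist k b / 2"
    proof -
      have "k - m = (1/2) *\<^sub>R (k - b)" unfolding m_def by (simp add: algebra_simps flip: scaleR_add_left)
      thus ?thesis by (simp add: dist_norm)
    qed
    ultimately show "k \<in> msum L (cball 0 (d/2))" unfolding msum_cball_iff
      using \<open>dist k b \<le> d\<close> by (intro bexI[of _ m]) auto
  qed
  have K1L: "K1 \<subseteq> msum L (cball 0 (d/2))"
  proof
    fix k assume k: "k \<in> K1"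
    obtain a where a: "a \<in> K0" "infdist k K0 = dist k a"
      using infdist_attains_inf[OF cl0] by metis
    have "infdist k K0 \<le> d" using hdist_infdist[OF ne(1) k] unfolding d_def .
    hence "dist k a \<le> d" using a by simp
    define m where "m = (1/2) *\<^sub>R (a + k)"
    have "m \<in> M" unfolding M_def M_mem m_def using k a(1) by blast
    hence "m \<in> L" using MsubL by blast
    moreover have "dist k m = dist k a / 2"
    proof -
      have "k - m = (1/2) *\<^sub>R (k - a)" unfolding m_def by (simp add: algebra_simps flip: scaleR_add_left)
      thus ?thesis by (simp add: dist_norm)
    qed
    ultimately show "k \<in> msum L (cball 0 (d/2))" unfolding msum_cball_iff
      using \<open>dist k a \<le> d\<close> by (intro bexI[of _ m]) auto
  qed
  have LK0: "L \<subseteq> msum K0 (cball 0 (d/2))" using c1(2) unfolding L_def by blast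
  have LK1: "L \<subseteq> msum K1 (cball 0 (d/2))" using c2(2) unfolding L_def by blast
  have h0: "d/2 \<in> hset K0 L" unfolding hset_def using K0L LK0 d4 by simp
  have h1: "d/2 \<in> hset K1 L" unfolding hset_def using K1L LK1 d4 by simp
  have u0: "hdist K0 L \<le> d/2" using hdist_le[OF h0] .
  have u1: "hdist K1 L \<le> d/2" using hdist_le[OF h1] .
  have "hdist K0 K1 \<le> hdist K0 L + hdist L K1"
    using hdist_tri[of K0 L K1] h0 h1 hset_sym[of K1 L] by blast
  hence tri: "d \<le> hdist K0 L + hdist K1 L" unfolding d_def using hdist_sym[of L K1] by simp
  have e0: "hdist K0 L = d/2" using u0 u1 tri by linarith
  have e1: "hdist K1 L = d/2" using u0 u1 tri by linarith
  have Mne: "M \<noteq> {}"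
  proof -
    obtain a b where "a \<in> K0" "b \<in> K1" using cl0 cl1 by blast
    hence "(1/2) *\<^sub>R (a + b) \<in> M" unfolding M_def M_mem by blast
    thus ?thesis by blast
  qed
  have Lne: "L \<noteq> {}" using Mne MsubL by blast
  have SL: "in_S L"
    unfolding in_S_def convex_body_def
  proof (intro conjI)
    show "compact L" unfolding L_def by (intro compact_Int compact_cball)
    show "convex L" unfolding L_def by (intro convex_Int convex_cball)
    show "L \<noteq> {}" by (rule Lne)
    show "\<exists>A. L = \<Inter>((\<lambda>a. cball a 1) ` A)" unfolding L_def by (intro exI[of _ "{c1, c2}"]) auto
  qed
  have uniq: "\<forall>M'. in_S M' \<and> hdist K0 M' = d / 2 \<and> hdist K1 M' = d / 2 \<longrightarrow> M' = M"
    using assms(3) unfolding S_cute_def Let_def M_def d_def by blast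
  hence "L = M" using SL e0 e1 by blast
  thus ?thesis unfolding lens_def M_def[symmetric] L_def using Lne unfolding L_def by blast
qed

end
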